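(* Let $0<\epsilon<1$, $r>0$ be constants, $p_2=\frac{1-\epsilon}{n}$, $p_3=\frac{r}{n\ln n}$, and $K_0=\max\{1,\lambda_1^{-1}(10)\}=\max\{1,\tfrac{2(9+\epsilon)}{r}\}$. Then with probability tending to $1$ as $n\to\infty$, there is no vertex $v$ of $\mathbb{G}(n,p_2,p_3)$ whose propagation component satisfies $K_0\ln n\le |C_v|\le n-1$.
   Context: $\mathbb{G}(n,p_2,p_3)$ is the random hypergraph on a vertex set $V$ with $|V|=n$ in which each of the $\binom n2$ possible 2-element edges is present with probability $p_2$ and each of the $\binom n3$ possible 3-element hyperedges is present with probability $p_3$, all independently. Propagation process from a vertex $v$: one maintains a set $\mathcal{Y}_t$ of active vertices and a set $\mathcal{D}_t$ of inactive vertices, with $\mathcal{Y}_0=\{v\}$, $\mathcal{D}_0=\emptyset$; vertices in neither set are unexplored. At time $t=0,1,2,\dots$, while $\mathcal{Y}_t\neq\emptyset$, pick an active vertex $v_t\in\mathcal{Y}_t$ and let $U_t$ be the set of unexplored vertices $u$ such that $\{v_t,u\}$ is a 2-edge or $\{v_t,u,w\}$ is a 3-edge for some $w\in\mathcal{D}_t$; set $\mathcal{Y}_{t+1}=(\mathcal{Y}_t\cup U_t)\setminus\{v_t\}$ and $\mathcal{D}_{t+1}=\mathcal{D}_t\cup\{v_t\}$. The process stops at $T_v=\min\{t:\mathcal{Y}_t=\emptyset\}$, and the propagation component of $v$ is $C_v=\mathcal{D}_{T_v}$, so $|C_v|=T_v$. Here $\lambda_1(x)=1-\epsilon+\frac r2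 x$. *)

theory Defs
  imports "HOL-Probability.Probability"
begin

text \<open>Vertex set V = {0..<n}. A hypergraph is a pair (E2, E3) of sets of
2-element and 3-element subsets of V.\<close>

definition edges_of_size :: "nat \<Rightarrow> nat \<Rightarrow> nat set set" where
  "edges_of_size n k = {e. e \<subseteq> {..<n} \<and> card e = k}"

definition random_subset :: "'a set \<Rightarrow> real \<Rightarrow> 'a set pmf" where
  "random_subset A p = map_pmf (\<lambda>f. {e \<in> A. f e}) (Pi_pmf A False (\<lambda>_. bernoulli_pmf p))"

definition random_hypergraph :: "nat \<Rightarrow> real \<Rightarrow> real \<Rightarrow> (nat set set \<times> nat set set) pmf" where
  "random_hypergraph n p2 p3 =
     pair_pmf (random_subset (edges_of_size n 2) p2) (random_subset (edges_of_size n 3) p3)"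

text \<open>One step of the propagation process on state (Y_t, D_t); the active vertex
chosen is the least one (the final component does not depend on this choice).\<close>
definition prop_step :: "nat \<Rightarrow> nat set set \<times> nat set set \<Rightarrow> nat set \<times> nat set \<Rightarrow> nat set \<times> nat set" where
  "prop_step n H S =
     (let (Y, D) = S in
      if Y = {} then (Y, D) else
      let vt = Min Y;
          U = {u \<in> {..<n}. u \<notin> Y \<and> u \<notin> D \<and>
                 ({vt, u} \<in> fst H \<or> (\<exists>w\<in>D. {vt, u, w} \<in> snd H))}
      in ((Y \<union> U) - {vt}, D \<union> {vt}))"

definition prop_state :: "nat \<Rightarrow> nat set set \<times> nat set set \<Rightarrow> nat \<Rightarrow> nat \<Rightarrow> nat set \<times> nat set" where
  "prop_state n H v t = (prop_step n H ^^ t) ({v}, {})"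

definition stop_time :: "nat \<Rightarrow> nat set set \<times> nat set set \<Rightarrow> nat \<Rightarrow> nat" where
  "stop_time n H v = (LEAST t. fst (prop_state n H v t) = {})"

definition prop_component :: "nat \<Rightarrow> nat set set \<times> nat set set \<Rightarrow> nat \<Rightarrow> nat set" where
  "prop_component n H v = snd (prop_state n H v (stop_time n H v))"

definition lambda1 :: "real \<Rightarrow> real \<Rightarrow> real \<Rightarrow> real" where
  "lambda1 \<epsilon> r x = 1 - \<epsilon> + r / 2 * x"

end

theory Submission
  imports Defs
begin

definition Uset :: "nat \<Rightarrow> nat set set \<times> nat set set \<Rightarrow> nat set \<Rightarrow> nat set \<Rightarrow> nat set" where
  "Uset n H Y D = {u \<in> {..<n}. u \<notin> Y \<and> u \<notin> D \<and>
                 ({Min Y, u} \<in> fst H \<or> (\<exists>w\<in>D. {Min Y, u, w} \<in> snd H))}"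

lemma step_eq: "prop_step n H (Y,D) = (if Y = {} then (Y,D) else ((Y \<union> Uset n H Y D) - {Min Y}, D \<union> {Min Y}))"
  by (simp add: prop_step_def Uset_def Let_def)

lemma state_Suc: "prop_state n H v (Suc t) = prop_step n H (prop_state n H v t)"
  by (simp add: prop_state_def)

lemma state_0: "prop_state n H v 0 = ({v},{})"
  by (simp add: prop_state_def)

context fixes n :: nat and H :: "nat set set \<times> nat set set" and v :: nat
  assumes vn: "v < n"
begin

abbreviation "YY t \<equiv> fst (prop_state n H v t)"
abbreviation "DD t \<equiv> snd (prop_state n H v t)"

lemma YD_Suc: "YY (Suc t) = (if YY t = {} then YY t else (YY t \<union> Uset n H (YY t) (DD t)) - {Min (YY t)})"
     "DD (Suc t) = (if YY t = {} then DD t else DD t \<union> {Min (YY t)})"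
  using step_eq[of n H "YY t" "DD t"] by (simp_all add: state_Suc)

lemma inv: "finite (YY t) \<and> YY t \<subseteq> {..<n} \<and> DD t \<subseteq> {..<n} \<and> YY t \<inter> DD t = {}"
proof (induction t)
  case 0 then show ?case using vn by (simp add: state_0)
next
  case (Suc t)
  have "finite (Uset n H (YY t) (DD t))" "Uset n H (YY t) (DD t) \<subseteq> {..<n}"
    by (auto simp: Uset_def intro: finite_subset[of _ "{..<n}"])
  moreover have "YY t \<noteq> {} \<Longrightarrow> Min (YY t) \<in> YY t" using Suc by auto
  moreover have "YY t \<noteq> {} \<Longrightarrow> Min (YY t) < n" using Suc Min_in by blast
  ultimately show ?case using Suc unfolding YD_Suc by (auto simp: Uset_def)
qed

lemma card_D: "(\<forall>s<t. YY s \<noteq> {}) \<Longrightarrow> card (DD t) = t"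
proof (induction t)
  case 0 then show ?case by (simp add: state_0)
next
  case (Suc t)
  then have ne: "YY t \<noteq> {}" by auto
  have fin: "finite (DD t)" using inv[of t] finite_subset by blast
  have "Min (YY t) \<in> YY t" using ne inv[of t] by auto
  then have "Min (YY t) \<notin> DD t" using inv[of t] by blast
  then show ?case using Suc ne fin unfolding YD_Suc by simp
qed

lemma terminates: "\<exists>t\<le>n. YY t = {}"
proof (rule ccontr)
  assume "\<not> ?thesis"
  then have "\<forall>s<Suc n. YY s \<noteq> {}" by auto
  then have "card (DD (Suc n)) = Suc n" by (rule card_D)
  moreover have "card (DD (Suc n)) \<le> n" using inv[of "Suc n"] by (metis card_lessThan card_mono finite_lessThan)
  ultimately show False by simp
qed

abbreviation "TT \<equiv> stop_time n H v"

lemma YT: "YY TT = {}" and T_le: "TT \<le> n"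
proof -
  obtain t where t: "t \<le> n" "YY t = {}" using terminates by blast
  show "YY TT = {}" unfolding stop_time_def by (rule LeastI[of _ t]) (use t in auto)
  have "TT \<le> t" unfolding stop_time_def by (rule Least_le) (use t in auto)
  then show "TT \<le> n" using t by simp
qed

lemma fixed: "TT \<le> s \<Longrightarrow> prop_state n H v s = prop_state n H v TT"
proof (induction s rule: dec_induct)
  case base then show ?case by simp
next
  case (step s)
  have eq: "prop_state n H v s = prop_state n H v TT" using step by simp
  have "prop_state n H v TT = ({}, DD TT)" using YT by (metis prod.collapse)
  then show ?case using eq step_eq[of n H "{}" "DD TT"] by (simp add: state_Suc)
qed

lemma mono1: "YY s \<union> DD s \<subseteq> YY (Suc s) \<union> DD (Suc s) \<and> DD s \<subseteq> DD (Suc s)"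
proof -
  have "YY s \<noteq> {} \<Longrightarrow> Min (YY s) \<in> YY s" using inv[of s] by auto
  then show ?thesis unfolding YD_Suc by auto
qed

lemma mono: "s \<le> t \<Longrightarrow> YY s \<union> DD s \<subseteq> YY t \<union> DD t \<and> DD s \<subseteq> DD t"
proof (induction t rule: dec_induct)
  case base then show ?case by simp
next
  case (step t) then show ?case using mono1[of t] by blast
qed

abbreviation "CC \<equiv> prop_component n H v"

lemma C_eq: "CC = DD TT" by (simp add: prop_component_def)

lemma all_in_C: "YY s \<union> DD s \<subseteq> CC"
proof (cases "s \<le> TT")
  case True then show ?thesis using mono[OF True] YT C_eq by auto
next
  case False then have "prop_state n H v s = prop_state n H v TT" by (intro fixed) simp
  then show ?thesis using YT C_eq by auto
qed

lemma v_in_C: "v \<in> CC" using all_in_C[of 0] by (simp add: state_0)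

lemma C_sub: "CC \<subseteq> {..<n}" using inv[of TT] C_eq by simp

lemma processed: "x \<in> DD t \<Longrightarrow> \<exists>s. YY s \<noteq> {} \<and> x = Min (YY s)"
proof (induction t)
  case 0 then show ?case by (simp add: state_0)
next
  case (Suc t) then show ?case unfolding YD_Suc by (auto split: if_splits)
qed

lemma processed_C: "x \<in> CC \<Longrightarrow> \<exists>s. YY s \<noteq> {} \<and> x = Min (YY s)"
  using processed C_eq by simp

lemma Min_in: "YY s \<noteq> {} \<Longrightarrow> Min (YY s) \<in> YY s" using inv[of s] by auto

lemma U_sub: "YY s \<noteq> {} \<Longrightarrow> Uset n H (YY s) (DD s) \<subseteq> CC"
  using all_in_C[of "Suc s"] unfolding YD_Suc by (auto simp: Uset_def)

lemma closure2: assumes "x \<in> CC" "u < n" "u \<notin> CC" shows "{x,u} \<notin> fst H"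
proof
  assume e: "{x,u} \<in> fst H"
  obtain s where s: "YY s \<noteq> {}" "x = Min (YY s)" using processed_C assms by blast
  have "u \<notin> YY s" "u \<notin> DD s" using all_in_C[of s] assms by auto
  then have "u \<in> Uset n H (YY s) (DD s)" using e s assms by (auto simp: Uset_def)
  then show False using U_sub[OF s(1)] assms by auto
qed

lemma closure3_aux: assumes "YY sa \<noteq> {}" "a = Min (YY sa)" "YY sb \<noteq> {}" "b = Min (YY sb)" "sa < sb"
  "u < n" "u \<notin> CC" shows "{a,b,u} \<notin> snd H"
proof
  assume e: "{a,b,u} \<in> snd H"
  have "a \<in> DD (Suc sa)" using assms(1,2) unfolding YD_Suc by simp
  then have aD: "a \<in> DD sb" using mono[of "Suc sa" sb] assms by auto
  have "u \<notin> YY sb" "u \<notin> DD sb" using all_in_C[of sb] assms by auto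
  moreover have "{b,u,a} \<in> snd H" using e by (metis insert_commute)
  ultimately have "u \<in> Uset n H (YY sb) (DD sb)" using aD assms by (auto simp: Uset_def)
  then show False using U_sub[OF assms(3)] assms by auto
qed

lemma closure3: assumes "a \<in> CC" "b \<in> CC" "a \<noteq> b" "u < n" "u \<notin> CC" shows "{a,b,u} \<notin> snd H"
proof -
  obtain sa where sa: "YY sa \<noteq> {}" "a = Min (YY sa)" using processed_C assms by blast
  obtain sb where sb: "YY sb \<noteq> {}" "b = Min (YY sb)" using processed_C assms by blast
  have "sa \<noteq> sb" using sa sb assms by auto
  then consider "sa < sb" | "sb < sa" by linarith
  then show ?thesis
  proof cases
    case 1 then show ?thesis using closure3_aux[OF sa sb] assms by auto
  next
    case 2 then show ?thesis using closure3_aux[OF sb sa _ assms(4,5)] by (metis insert_commute)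
  qed
qed

definition ent :: "nat \<Rightarrow> nat" where "ent u = (LEAST t. u \<in> YY t \<union> DD t)"

lemma witness_ex: assumes "u \<in> CC" "u \<noteq> v"
  shows "\<exists>e. u \<in> e \<and> e \<subseteq> CC \<and> (card e = 2 \<and> e \<in> fst H \<or> card e = 3 \<and> e \<in> snd H)
            \<and> (\<forall>y\<in>e-{u}. ent y < ent u)"
proof -
  have ex: "u \<in> YY TT \<union> DD TT" using assms C_eq by simp
  have uin: "u \<in> YY (ent u) \<union> DD (ent u)" unfolding ent_def by (rule LeastI) (rule ex)
  have "ent u \<noteq> 0"
  proof
    assume "ent u = 0"
    then have "u \<in> YY 0 \<union> DD 0" using uin by simp
    then show False using assms by (simp add: state_0)
  qed
  then obtain s where es: "ent u = Suc s" by (cases "ent u") auto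
  have nu: "u \<notin> YY s \<union> DD s"
  proof
    assume "u \<in> YY s \<union> DD s"
    then have "ent u \<le> s" unfolding ent_def by (rule Least_le)
    then show False using es by simp
  qed
  have uin': "u \<in> YY (Suc s) \<union> DD (Suc s)" using uin es by simp
  have ne: "YY s \<noteq> {}"
  proof
    assume "YY s = {}"
    then have "YY (Suc s) \<union> DD (Suc s) = YY s \<union> DD s" unfolding YD_Suc by simp
    then show False using nu uin' by simp
  qed
  have "u \<in> Uset n H (YY s) (DD s)" using nu uin' ne Min_in[OF ne] unfolding YD_Suc by auto
  then have uU: "u \<notin> YY s" "u \<notin> DD s" "{Min (YY s), u} \<in> fst H \<or> (\<exists>w\<in>DD s. {Min (YY s), u, w} \<in> snd H)"
    by (auto simp: Uset_def)
  define m where "m = Min (YY s)"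
  have mY: "m \<in> YY s" using Min_in[OF ne] m_def by simp
  have entle: "ent y \<le> s" if "y \<in> YY s \<union> DD s" for y unfolding ent_def by (rule Least_le) (rule that)
  have sub: "YY s \<union> DD s \<subseteq> CC" by (rule all_in_C)
  have disj: "YY s \<inter> DD s = {}" using inv[of s] by simp
  from uU(3) show ?thesis
  proof
    assume e2: "{Min (YY s), u} \<in> fst H"
    show ?thesis
    proof (intro exI[of _ "{m,u}"] conjI)
      show "card {m,u} = 2 \<and> {m,u} \<in> fst H \<or> card {m,u} = 3 \<and> {m,u} \<in> snd H"
      proof -
        have "m \<noteq> u" using mY uU by auto
        then show ?thesis using e2 m_def by auto
      qed
      have "ent m \<le> s" using entle mY by blast
      then show "\<forall>y\<in>{m,u}-{u}. ent y < ent u" using es by auto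
    qed (use mY sub assms in auto)
  next
    assume "\<exists>w\<in>DD s. {Min (YY s), u, w} \<in> snd H"
    then obtain w where w: "w \<in> DD s" "{m,u,w} \<in> snd H" using m_def by blast
    have "m \<noteq> w" using mY w disj by auto
    show ?thesis
    proof (intro exI[of _ "{m,u,w}"] conjI)
      show "card {m,u,w} = 2 \<and> {m,u,w} \<in> fst H \<or> card {m,u,w} = 3 \<and> {m,u,w} \<in> snd H"
      proof -
        have "m \<noteq> u" "u \<noteq> w" using mY w(1) uU(1,2) by auto
        then have "card {m,u,w} = 3" using \<open>m \<noteq> w\<close> by simp
        then show ?thesis using w(2) by simp
      qed
      have "ent m \<le> s" "ent w \<le> s" using entle mY w by blast+
      then show "\<forall>y\<in>{m,u,w}-{u}. ent y < ent u" using es by auto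
    qed (use mY w sub assms in auto)
  qed
qed

lemma witness: "\<exists>f. inj_on f (CC - {v}) \<and> (\<forall>u\<in>CC-{v}. u \<in> f u \<and> f u \<subseteq> CC \<and>
     (card (f u) = 2 \<and> f u \<in> fst H \<or> card (f u) = 3 \<and> f u \<in> snd H))"
proof -
  obtain f where f: "\<forall>u\<in>CC-{v}. u \<in> f u \<and> f u \<subseteq> CC \<and> (card (f u) = 2 \<and> f u \<in> fst H \<or> card (f u) = 3 \<and> f u \<in> snd H)
            \<and> (\<forall>y\<in>f u-{u}. ent y < ent u)"
    using witness_ex by (metis Diff_iff singletonI)
  have "inj_on f (CC - {v})"
  proof (rule inj_onI, rule ccontr)
    fix x y assume xy: "x \<in> CC - {v}" "y \<in> CC - {v}" "f x = f y" "x \<noteq> y"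
    then have "ent y < ent x" using f by (metis Diff_iff singletonD)
    moreover have "ent x < ent y" using f xy by (metis Diff_iff singletonD)
    ultimately show False by simp
  qed
  then show ?thesis using f by blast
qed

end

lemma finite_set_rs: "finite A \<Longrightarrow> finite (set_pmf (random_subset A p))"
  unfolding random_subset_def by (rule finite_subset[of _ "Pow A"]) auto

lemma prob_rs:
  assumes A: "finite A" and "P \<subseteq> A" "N \<subseteq> A" "P \<inter> N = {}" "0 \<le> p" "p \<le> 1"
  shows "measure_pmf.prob (random_subset A p) {S. P \<subseteq> S \<and> S \<inter> N = {}} = p ^ card P * (1-p) ^ card N"
proof -
  define B where "B e = (if e \<in> P then {True} else if e \<in> N then {False} else UNIV)" for e
  have pre: "(\<lambda>f. {e\<in>A. f e}) -` {S. P \<subseteq> S \<and> S \<inter> N = {}} = Pi A B"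
    using assms(2-4) by (auto simp: B_def Pi_def split: if_splits)
  have pb: "measure_pmf.prob (bernoulli_pmf p) (B e) = (if e \<in> P then p else 1) * (if e \<in> N then 1-p else 1)" for e
    using assms(4-6) by (auto simp: B_def measure_pmf_single measure_pmf.prob_space)
  have "measure_pmf.prob (random_subset A p) {S. P \<subseteq> S \<and> S \<inter> N = {}}
      = measure_pmf.prob (Pi_pmf A False (\<lambda>_. bernoulli_pmf p)) (Pi A B)"
    unfolding random_subset_def measure_map_pmf pre ..
  also have "\<dots> = (\<Prod>e\<in>A. measure_pmf.prob (bernoulli_pmf p) (B e))"
    by (rule measure_Pi_pmf_Pi[OF A])
  also have "\<dots> = (\<Prod>e\<in>A. (if e \<in> P then p else 1)) * (\<Prod>e\<in>A. (if e \<in> N then 1-p else 1))"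
    unfolding pb by (rule prod.distrib)
  also have "(\<Prod>e\<in>A. (if e \<in> P then p else 1)) = p ^ card P"
    using assms(2) A by (simp add: prod.If_cases Int_absorb1)
  also have "(\<Prod>e\<in>A. (if e \<in> N then 1-p else 1)) = (1-p) ^ card N"
    using assms(3) A by (simp add: prod.If_cases Int_absorb1)
  finally show ?thesis .
qed

lemma prob_pair:
  assumes "finite (set_pmf M)" "finite (set_pmf N)"
  shows "measure_pmf.prob (pair_pmf M N) (X \<times> Y) = measure_pmf.prob M X * measure_pmf.prob N Y"
proof -
  have "measure_pmf.prob (pair_pmf M N) (X\<times>Y) = measure_pmf.prob (pair_pmf M N) ((X\<times>Y) \<inter> set_pmf (pair_pmf M N))"
    by (rule measure_Int_set_pmf[symmetric])
  also have "(X\<times>Y) \<inter> set_pmf (pair_pmf M N) = (X \<inter> set_pmf M) \<times> (Y \<inter> set_pmf N)"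
    by (auto simp: set_pair_pmf)
  also have "measure_pmf.prob (pair_pmf M N) \<dots> = measure_pmf.prob M (X \<inter> set_pmf M) * measure_pmf.prob N (Y \<inter> set_pmf N)"
    by (rule measure_pmf_prob_product) (use assms in \<open>auto intro: countable_finite\<close>)
  finally show ?thesis by (simp add: measure_Int_set_pmf)
qed

lemma finite_edges: "finite (edges_of_size n k)"
  unfolding edges_of_size_def by (rule finite_subset[of _ "Pow {..<n}"]) auto

lemma prob_hg:
  assumes "P2 \<subseteq> edges_of_size n 2" "N2 \<subseteq> edges_of_size n 2" "P2 \<inter> N2 = {}"
    "P3 \<subseteq> edges_of_size n 3" "N3 \<subseteq> edges_of_size n 3" "P3 \<inter> N3 = {}"
    "0 \<le> p2" "p2 \<le> 1" "0 \<le> p3" "p3 \<le> 1"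
  shows "measure_pmf.prob (random_hypergraph n p2 p3)
     {H. P2 \<subseteq> fst H \<and> fst H \<inter> N2 = {} \<and> P3 \<subseteq> snd H \<and> snd H \<inter> N3 = {}}
     = p2 ^ card P2 * (1-p2) ^ card N2 * (p3 ^ card P3 * (1-p3) ^ card N3)"
proof -
  have "{H. P2 \<subseteq> fst H \<and> fst H \<inter> N2 = {} \<and> P3 \<subseteq> snd H \<and> snd H \<inter> N3 = {}}
       = {S. P2 \<subseteq> S \<and> S \<inter> N2 = {}} \<times> {S. P3 \<subseteq> S \<and> S \<inter> N3 = {}}" by auto
  then show ?thesis unfolding random_hypergraph_def
    using assms by (simp add: prob_pair finite_set_rs finite_edges prob_rs)
qed


definition N2s :: "nat \<Rightarrow> nat set \<Rightarrow> nat set set" where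
  "N2s n C = (\<lambda>(x,u). {x,u}) ` (C \<times> ({..<n} - C))"
definition N3s :: "nat \<Rightarrow> nat set \<Rightarrow> nat set set" where
  "N3s n C = (\<lambda>(s,u). insert u s) ` ({s. s \<subseteq> C \<and> card s = 2} \<times> ({..<n} - C))"

lemma card_N2: assumes "C \<subseteq> {..<n}" shows "card (N2s n C) = card C * (n - card C)"
proof -
  have fin: "finite C" using assms finite_subset by blast
  have "inj_on (\<lambda>(x,u). {x,u}) (C \<times> ({..<n} - C))"
    by (auto simp: inj_on_def doubleton_eq_iff)
  then have "card (N2s n C) = card (C \<times> ({..<n} - C))" unfolding N2s_def by (rule card_image)
  also have "\<dots> = card C * (n - card C)" using fin assms by (simp add: card_cartesian_product card_Diff_subset)
  finally show ?thesis .
qed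

lemma card_N3: assumes "C \<subseteq> {..<n}" shows "card (N3s n C) = (card C choose 2) * (n - card C)"
proof -
  have fin: "finite C" using assms finite_subset by blast
  have "inj_on (\<lambda>(s,u). insert u s) ({s. s \<subseteq> C \<and> card s = 2} \<times> ({..<n} - C))"
  proof (rule inj_onI, clarify)
    fix s u s' u' assume h: "s \<subseteq> C" "u \<notin> C" "s' \<subseteq> C" "u' \<notin> C" "insert u s = insert u' s'"
    then have uu: "u = u'" by blast
    have "u \<notin> s" "u' \<notin> s'" using h by auto
    then show "s = s' \<and> u = u'" using h(5) uu by (metis Diff_insert_absorb)
  qed
  then have "card (N3s n C) = card ({s. s \<subseteq> C \<and> card s = 2} \<times> ({..<n} - C))" unfolding N3s_def by (rule card_image)
  also have "\<dots> = (card C choose 2) * (n - card C)"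
    using fin assms by (simp add: card_cartesian_product card_Diff_subset n_subsets)
  finally show ?thesis .
qed

lemma N2_sub: assumes "C \<subseteq> {..<n}" shows "N2s n C \<subseteq> edges_of_size n 2"
proof
  fix e assume "e \<in> N2s n C"
  then obtain a b where e: "e = {a,b}" "a \<in> C" "b < n" "b \<notin> C" unfolding N2s_def by auto
  then have "a \<noteq> b" by auto
  then show "e \<in> edges_of_size n 2" using e assms unfolding edges_of_size_def by auto
qed

lemma N3_sub: assumes "C \<subseteq> {..<n}" shows "N3s n C \<subseteq> edges_of_size n 3"
proof
  fix e assume "e \<in> N3s n C"
  then obtain s u where e: "e = insert u s" "s \<subseteq> C" "card s = 2" "u < n" "u \<notin> C" unfolding N3s_def by auto
  then have "finite s" "u \<notin> s" using card_ge_0_finite by fastforce+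
  then show "e \<in> edges_of_size n 3" using e assms unfolding edges_of_size_def by auto
qed

definition Cand :: "nat set \<Rightarrow> nat \<Rightarrow> nat set set" where
  "Cand C u = {e. e \<subseteq> C \<and> u \<in> e \<and> (card e = 2 \<or> card e = 3)}"

definition wt :: "real \<Rightarrow> real \<Rightarrow> nat set \<Rightarrow> real" where
  "wt p2 p3 e = (if card e = 2 then p2 else p3)"

lemma finite_Cand: "finite C \<Longrightarrow> finite (Cand C u)"
  unfolding Cand_def by (rule finite_subset[of _ "Pow C"]) auto

lemma sum_Cand: fixes p2 p3 :: real assumes "finite C" "0 \<le> p2" "0 \<le> p3"
  shows "(\<Sum>e\<in>Cand C u. wt p2 p3 e) \<le> card C * p2 + card C ^ 2 * p3"
proof -
  define C2 where "C2 = {e. e \<subseteq> C \<and> u \<in> e \<and> card e = 2}"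
  define C3 where "C3 = {e. e \<subseteq> C \<and> u \<in> e \<and> card e = 3}"
  have eq: "Cand C u = C2 \<union> C3" "C2 \<inter> C3 = {}" by (auto simp: Cand_def C2_def C3_def)
  have f2: "finite C2" unfolding C2_def by (rule finite_subset[of _ "Pow C"]) (use assms in auto)
  have f3: "finite C3" unfolding C3_def by (rule finite_subset[of _ "Pow C"]) (use assms in auto)
  have s2: "C2 \<subseteq> (\<lambda>x. {u,x}) ` C"
  proof
    fix e assume e: "e \<in> C2"
    then have "card (e - {u}) = 1" unfolding C2_def by auto
    then obtain x where "e - {u} = {x}" by (metis card_1_singletonE)
    then show "e \<in> (\<lambda>x. {u,x}) ` C" using e unfolding C2_def by auto
  qed
  have s3: "C3 \<subseteq> (\<lambda>(x,y). {u,x,y}) ` (C \<times> C)"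
  proof
    fix e assume e: "e \<in> C3"
    then have "card (e - {u}) = 2" unfolding C3_def by auto
    then obtain x y where "e - {u} = {x,y}" by (metis card_2_iff)
    then show "e \<in> (\<lambda>(x,y). {u,x,y}) ` (C \<times> C)" using e unfolding C3_def by auto
  qed
  have c2: "card C2 \<le> card C"
    using card_mono[OF _ s2] card_image_le[of C "\<lambda>x. {u,x}"] assms(1) by fastforce
  have c3: "card C3 \<le> card C ^ 2"
    using card_mono[OF _ s3] card_image_le[of "C \<times> C" "\<lambda>(x,y). {u,x,y}"] assms(1)
    by (simp add: card_cartesian_product power2_eq_square)
  have "(\<Sum>e\<in>Cand C u. wt p2 p3 e) = (\<Sum>e\<in>C2. wt p2 p3 e) + (\<Sum>e\<in>C3. wt p2 p3 e)"
    unfolding eq(1) by (rule sum.union_disjoint[OF f2 f3 eq(2)])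
  also have "(\<Sum>e\<in>C2. wt p2 p3 e) = card C2 * p2" by (simp add: wt_def C2_def)
  also have "(\<Sum>e\<in>C3. wt p2 p3 e) = card C3 * p3" by (simp add: wt_def C3_def)
  also have "card C2 * p2 + card C3 * p3 \<le> card C * p2 + card C ^ 2 * p3"
    using c2 c3 assms by (intro add_mono mult_right_mono) (simp_all flip: of_nat_power)
  finally show ?thesis .
qed


lemma kk_fact: "real k ^ k / fact k \<le> exp (real k)"
proof -
  have s: "(\<lambda>j. real k ^ j / fact j) sums exp (real k)"
    using exp_converges[of "real k"] by (simp add: divide_inverse mult.commute)
  have "(\<Sum>j\<in>{k}. real k ^ j / fact j) \<le> (\<Sum>j. real k ^ j / fact j)"
    by (rule sum_le_suminf) (use s in \<open>auto simp: sums_iff\<close>)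
  then show ?thesis using s by (simp add: sums_iff)
qed

lemma one_minus_pow: fixes p :: real assumes "0 \<le> p" "p \<le> 1"
  shows "(1-p)^m \<le> exp (-(p * real m))"
proof -
  have "(1-p)^m \<le> exp (-p)^m"
    by (rule power_mono) (use exp_ge_add_one_self[of "-p"] assms in auto)
  also have "\<dots> = exp (real m * (-p))" by (rule exp_of_nat_mult[symmetric])
  finally show ?thesis by (simp add: mult.commute)
qed

lemma choose2_nat: "2 * (k choose 2) = k * (k - 1)"
proof (induction k)
  case 0 then show ?case by simp
next
  case (Suc k)
  have "(Suc k choose 2) = (k choose 1) + (k choose 2)" by (simp add: numeral_2_eq_2)
  then show ?case using Suc by (cases k) (auto simp: algebra_simps)
qed

lemma choose2: "real (k choose 2) = real k * (real k - 1) / 2"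
proof -
  have "real (2 * (k choose 2)) = real (k * (k - 1))" by (simp only: choose2_nat)
  then show ?thesis by (cases k) (auto simp: algebra_simps)
qed

lemma exp3: "8 \<le> exp (3::real)"
proof -
  have "2 \<le> exp (1::real)" using exp_ge_add_one_self[of 1] by simp
  then have "2^3 \<le> exp (1::real) ^ 3" by (rule power_mono) simp
  also have "\<dots> = exp (real 3 * 1)" by (simp only: exp_of_nat_mult)
  finally show ?thesis by simp
qed

lemma base:
  fixes l y :: real assumes "10 \<le> l" "0 \<le> y" "y \<le> 1/4"
  shows "exp 1 * (2 * l) * exp (-(7/8)*l) * exp y \<le> exp (-3)"
proof -
  have "1 + (l/4 - 1) \<le> exp (l/4 - 1)" by (rule exp_ge_add_one_self)
  then have l: "l \<le> 4 * exp (l/4 - 1)" by simp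
  have "exp 1 * (2 * l) * exp (-(7/8)*l) * exp y \<le> exp 1 * (2 * (4 * exp (l/4 - 1))) * exp (-(7/8)*l) * exp y"
    using l by (intro mult_right_mono mult_left_mono) auto
  also have "\<dots> = 8 * (exp 1 * exp (l/4 - 1) * exp (-(7/8)*l) * exp y)" by simp
  also have "exp 1 * exp (l/4 - 1) * exp (-(7/8)*l) * exp y = exp (1 + (l/4 - 1) + (-(7/8)*l) + y)"
    by (simp only: exp_add)
  also have "8 * exp (1 + (l/4 - 1) + (-(7/8)*l) + y) \<le> 8 * exp (-6)"
    using assms by (intro mult_left_mono) auto
  also have "\<dots> \<le> exp 3 * exp (-6)" using exp3 by (intro mult_right_mono) auto
  also have "\<dots> = exp (-3)" by (simp flip: exp_add)
  finally show ?thesis .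
qed

lemma exp_ln3: fixes nn :: real assumes "0 < nn" shows "exp (- (3 * ln nn)) = 1 / nn^3"
proof -
  have "exp (3 * ln nn) = exp (real 3 * ln nn)" by simp
  also have "\<dots> = nn ^ 3" by (simp only: exp_of_nat_mult) (use assms in simp)
  finally show ?thesis by (simp add: exp_minus field_simps)
qed

lemma caseA:
  fixes e r :: real and n k :: nat
  defines "nn \<equiv> real n" and "L \<equiv> ln (real n)" and "x \<equiv> real k"
  assumes e: "0 < e" "e < 1" and r: "0 < r" and L1: "1 \<le> L" and y4: "r/(2*L) \<le> 1/4"
    and k1: "1 \<le> k" and k8: "8*k \<le> n" and Lk: "L \<le> x" and lam: "10 \<le> 1 - e + r*x/(2*L)"
  shows "real (n choose k) * (x * ((x*((1-e)/nn) + x^2*(r/(nn*L)))^(k-1) *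
          ((1-(1-e)/nn)^(k*(n-k)) * (1-r/(nn*L))^((k choose 2)*(n-k))))) \<le> 1/nn^2"
proof -
  define lam where "lam = 1 - e + r*x/(2*L)"
  define y where "y = r/(2*L)"
  define W where "W = x*((1-e)/nn) + x^2*(r/(nn*L))"
  define Z where "Z = (1-(1-e)/nn)^(k*(n-k)) * (1-r/(nn*L))^((k choose 2)*(n-k))"
  define E where "E = exp (-((7/8)*x*lam - x*y))"
  have nn0: "0 < nn" using k8 k1 unfolding nn_def by simp
  have x1: "1 \<le> x" using k1 unfolding x_def by simp
  have xn: "8*x \<le> nn" using k8 unfolding x_def nn_def by (simp flip: of_nat_mult)
  have L0: "0 < L" using L1 by simp
  have y0: "0 \<le> y" using r L0 unfolding y_def by simp
  have lam10: "10 \<le> lam" using lam unfolding lam_def .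
  have Lnn: "L \<le> nn" using ln_le_minus_one[of nn] nn0 unfolding L_def nn_def by simp
  have rL: "r \<le> L" using y4 L0 by (simp add: field_simps)
  have p2: "0 \<le> (1-e)/nn" "(1-e)/nn \<le> 1" using e nn0 xn x1 by (auto simp: field_simps)
  have p3: "0 \<le> r/(nn*L)" "r/(nn*L) \<le> 1"
  proof -
    show "0 \<le> r/(nn*L)" using r nn0 L0 by simp
    have "r \<le> 1 * L" using rL by simp
    also have "\<dots> \<le> nn * L" using xn x1 L0 by (intro mult_right_mono) auto
    finally show "r/(nn*L) \<le> 1" using nn0 L0 by simp
  qed
  have h1: "real (n choose k) \<le> nn^k / fact k"
  proof -
    have "real ((n choose k) * fact k) \<le> real (n^k)" by (rule of_nat_mono) (rule binomial_fact_pow)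
    then have "real (n choose k) * fact k \<le> nn^k" unfolding nn_def by simp
    then show ?thesis by (simp add: field_simps)
  qed
  have hW0: "0 \<le> W" unfolding W_def using p2 p3 x1 by (intro add_nonneg_nonneg mult_nonneg_nonneg) auto
  have hW: "W \<le> 2*lam*x/nn"
  proof -
    have "W = x/nn * ((1-e) + r*x/L)" unfolding W_def using nn0 L0 by (simp add: field_simps power2_eq_square)
    also have "\<dots> \<le> x/nn * (2*(1-e) + r*x/L)" using e x1 nn0 by (intro mult_left_mono) auto
    also have "\<dots> = 2*lam*x/nn" unfolding lam_def using L0 nn0 by (simp add: field_simps)
    finally show ?thesis .
  qed
  have hZ0: "0 \<le> Z" unfolding Z_def using p2 p3 by simp
  have hZ: "Z \<le> exp (-((1-e)/nn * real (k*(n-k)) + r/(nn*L) * real ((k choose 2)*(n-k))))"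
  proof -
    have "Z \<le> exp (-((1-e)/nn * real (k*(n-k)))) * exp (-(r/(nn*L) * real ((k choose 2)*(n-k))))"
      unfolding Z_def using p2 p3 by (intro mult_mono one_minus_pow) auto
    then show ?thesis by (simp flip: exp_add)
  qed
  have hexp: "(7/8)*x*lam - x*y \<le> (1-e)/nn * real (k*(n-k)) + r/(nn*L) * real ((k choose 2)*(n-k))"
  proof -
    define t where "t = (nn - x)/nn"
    have kn: "k \<le> n" using k8 by simp
    have rk: "real (k*(n-k)) = x*(nn-x)" using kn unfolding x_def nn_def by (simp add: of_nat_diff)
    have rc: "real ((k choose 2)*(n-k)) = x*(x-1)/2*(nn-x)" using kn unfolding x_def nn_def
      by (simp add: of_nat_diff choose2)
    have eq: "(1-e)/nn * real (k*(n-k)) + r/(nn*L) * real ((k choose 2)*(n-k)) = x*t*(lam - y)"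
      unfolding rk rc t_def lam_def y_def using nn0 L0 by (simp add: field_simps)
    have t1: "7/8 \<le> t" "t \<le> 1" unfolding t_def using nn0 xn x1 by (auto simp: field_simps)
    have "lam - y = (1-e) + r*(x-1)/(2*L)" unfolding lam_def y_def using L0 by (simp add: field_simps)
    moreover have "0 \<le> r*(x-1)/(2*L)" using r x1 L0 by simp
    ultimately have ly: "0 \<le> lam - y" using e by simp
    have "(7/8)*x*lam \<le> t*x*lam" using t1 x1 lam10 by (intro mult_right_mono) auto
    moreover have "t*x*y \<le> x*y" using t1 x1 y0 by (simp add: mult_left_le_one_le mult_nonneg_nonneg)
    ultimately have "(7/8)*x*lam - x*y \<le> x*t*(lam - y)" by (simp add: algebra_simps)
    then show ?thesis using eq by simp
  qed
  obtain j where kj: "k = Suc j" using k1 by (cases k) auto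
  have lam1: "1 \<le> 2*lam" using lam10 by simp
  have "real (n choose k) * (x * (W^(k-1) * Z)) \<le> (nn^k / fact k) * (x * ((2*lam*x/nn)^(k-1) * E))"
  proof (rule mult_mono)
    show "x * (W^(k-1) * Z) \<le> x * ((2*lam*x/nn)^(k-1) * E)"
    proof (intro mult_left_mono mult_mono)
      show "W^(k-1) \<le> (2*lam*x/nn)^(k-1)" by (rule power_mono[OF hW hW0])
      show "Z \<le> E" using hZ hexp unfolding E_def by (meson exp_le_cancel_iff le_minus_iff order_trans neg_le_iff_le)
    qed (use hW0 hZ0 x1 lam10 nn0 in auto)
  qed (use h1 hW0 hZ0 x1 in auto)
  also have "(nn^k / fact k) * (x * ((2*lam*x/nn)^(k-1) * E)) = nn * (x^k / fact k) * (2*lam)^j * E"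
  proof -
    have a: "(2*lam*x/nn)^(k-1) = (2*lam)^j * x^j / nn^j" using kj by (simp add: power_mult_distrib power_divide)
    have b: "nn^k = nn*nn^j" "x^k = x*x^j" using kj by simp_all
    have c: "nn^j \<noteq> 0" using nn0 by simp
    show ?thesis unfolding a b using c by (simp add: field_simps)
  qed
  also have "\<dots> \<le> nn * exp x * (2*lam)^k * E"
  proof -
    have "x^k / fact k \<le> exp x" unfolding x_def by (rule kk_fact)
    moreover have "(2*lam)^j \<le> (2*lam)^k" unfolding kj using lam1 by (simp add: power_increasing)
    ultimately show ?thesis using nn0 lam10 unfolding E_def
      by (intro mult_mono mult_left_mono) (auto simp: zero_le_mult_iff)
  qed
  also have "\<dots> = nn * (exp 1 * (2*lam) * exp (-(7/8)*lam) * exp y)^k"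
  proof -
    have ex: "exp x = exp 1 ^ k" unfolding x_def using exp_of_nat_mult[of k 1] by simp
    have "E = exp (real k * (-(7/8)*lam + y))" unfolding E_def x_def by (simp add: algebra_simps)
    also have "\<dots> = exp (-(7/8)*lam + y) ^ k" by (rule exp_of_nat_mult)
    also have "exp (-(7/8)*lam + y) = exp (-(7/8)*lam) * exp y" by (rule exp_add)
    finally have "E = exp (-(7/8)*lam) ^ k * exp y ^ k" by (simp only: power_mult_distrib)
    then show ?thesis using ex by (simp add: power_mult_distrib)
  qed
  also have "\<dots> \<le> nn * exp (-3) ^ k"
    using base[OF lam10 y0 y4[folded y_def]] nn0 lam10
    by (intro mult_left_mono power_mono) auto
  also have "exp (-3::real) ^ k = exp (- (3 * x))" unfolding x_def using exp_of_nat_mult[of k "-3::real"]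
    by (simp add: mult.commute)
  also have "nn * exp (-(3*x)) \<le> nn * exp (-(3*L))" using Lk nn0 by simp
  also have "exp (-(3*L)) = 1/nn^3" unfolding L_def nn_def by (rule exp_ln3) (use nn0 nn_def in simp)
  also have "nn * (1/nn^3) = 1/nn^2" using nn0 by (simp add: power3_eq_cube power2_eq_square)
  finally show ?thesis unfolding W_def Z_def .
qed

lemma caseB:
  fixes r :: real and n k :: nat
  defines "nn \<equiv> real n" and "L \<equiv> ln (real n)" and "x \<equiv> real k"
  assumes r: "0 < r" and L1: "1 \<le> L" and n16: "16 \<le> n" and k8: "n < 8*k" and kn: "k < n"
    and big: "768*L^2 \<le> r*nn" and p3le: "r/(nn*L) \<le> 1"
  shows "real (n choose k) * (1 - r/(nn*L))^((k choose 2)*(n-k)) \<le> 1/nn^2"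
proof -
  define j where "j = n - k"
  define p where "p = r/(nn*L)"
  have nn0: "0 < nn" using n16 unfolding nn_def by simp
  have nn16: "16 \<le> nn" using n16 unfolding nn_def by simp
  have L0: "0 < L" using L1 by simp
  have j1: "1 \<le> j" using kn unfolding j_def by simp
  have xn: "nn < 8*x" using k8 unfolding x_def nn_def by (simp flip: of_nat_mult)
  have p0: "0 \<le> p" using r nn0 L0 unfolding p_def by simp
  have h1: "real (n choose k) \<le> nn^j"
  proof -
    have "n choose k = n choose j" unfolding j_def using kn by (intro binomial_symmetric) simp
    also have "\<dots> \<le> n^j" by (rule binomial_le_pow) (simp add: j_def)
    finally have "n choose k \<le> n^j" .
    then have "real (n choose k) \<le> real (n^j)" by (rule of_nat_mono)
    then show ?thesis unfolding nn_def by simp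
  qed
  have h2: "(1-p)^((k choose 2)*j) \<le> exp (-(p * real ((k choose 2)*j)))"
    by (rule one_minus_pow[OF p0]) (use p3le p_def in simp)
  have h3: "3*L*real j \<le> p * real ((k choose 2)*j)"
  proof -
    have x2: "2 \<le> x" using xn nn16 by simp
    have e1: "x*(x-1)/2 - x*x/4 = x*(x-2)/4" by (simp add: field_simps)
    have "0 \<le> x*(x-2)/4" using x2 by simp
    then have "x*x/4 \<le> x*(x-1)/2" using e1 by linarith
    moreover have "(nn/8)*(nn/8) \<le> x*x" using xn nn0 by (intro mult_mono) auto
    moreover have "(nn/8)*(nn/8) = nn*nn/64" by simp
    ultimately have q: "nn*nn/256 \<le> x*(x-1)/2" by simp
    have "3*L \<le> p * (nn*nn/256)" unfolding p_def using big nn0 L0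
      by (simp add: field_simps power2_eq_square)
    also have "\<dots> \<le> p * (x*(x-1)/2)" using q p0 by (rule mult_left_mono)
    finally have "3*L \<le> p * (x*(x-1)/2)" .
    then have "3*L*real j \<le> p * (x*(x-1)/2) * real j" by (rule mult_right_mono) simp
    then show ?thesis unfolding x_def by (simp add: choose2)
  qed
  have "real (n choose k) * (1 - r/(nn*L))^((k choose 2)*(n-k)) \<le> nn^j * exp (-(3*L*real j))"
  proof (rule mult_mono)
    show "(1 - r/(nn*L))^((k choose 2)*(n-k)) \<le> exp (-(3*L*real j))"
      using h2 h3 unfolding p_def j_def by (smt (verit) exp_le_cancel_iff)
  qed (use h1 nn0 p3le in auto)
  also have "exp (-(3*L*real j)) = exp (-(3*L)) ^ j" using exp_of_nat_mult[of j "-(3*L)"]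
    by (simp add: algebra_simps)
  also have "exp (-(3*L)) = 1/nn^3" unfolding L_def nn_def by (rule exp_ln3) (use nn0 nn_def in simp)
  also have "nn^j * (1/nn^3)^j = (nn * (1/nn^3))^j" by (simp only: power_mult_distrib)
  also have "nn * (1/nn^3) = 1/nn^2" using nn0 by (simp add: power3_eq_cube power2_eq_square)
  also have "(1/nn^2)^j \<le> (1/nn^2)^1" using j1 nn16 by (intro power_decreasing) (auto simp: field_simps)
  finally show ?thesis by simp
qed


definition bnd :: "nat \<Rightarrow> real \<Rightarrow> real \<Rightarrow> nat \<Rightarrow> real" where
  "bnd n p2 p3 k = (if 8*k \<le> n then real (n choose k) * (k * ((k*p2 + k^2*p3)^(k-1) *
      ((1-p2)^(k*(n-k)) * (1-p3)^((k choose 2)*(n-k)))))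
     else real (n choose k) * (1-p3)^((k choose 2)*(n-k)))"

definition P2s where "P2s C v f = f ` {u \<in> C-{v}. card (f u) = 2}"
definition P3s where "P3s C v f = f ` {u \<in> C-{v}. card (f u) = 3}"
definition Ev where "Ev n C v f = {H. P2s C v f \<subseteq> fst H \<and> fst H \<inter> N2s n C = {} \<and>
                                     P3s C v f \<subseteq> snd H \<and> snd H \<inter> N3s n C = {}}"
definition FF where "FF C v = {f \<in> PiE (C-{v}) (Cand C). inj_on f (C-{v})}"

lemma prob_Ev:
  fixes p2 p3 :: real
  assumes p: "0 \<le> p2" "p2 \<le> 1" "0 \<le> p3" "p3 \<le> 1"
    and C: "C \<subseteq> {..<n}" and f: "f \<in> FF C v"
  shows "measure_pmf.prob (random_hypergraph n p2 p3) (Ev n C v f)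
    = (\<Prod>u\<in>C-{v}. wt p2 p3 (f u)) * ((1-p2)^card (N2s n C) * (1-p3)^card (N3s n C))"
proof -
  have fC: "finite C" using C finite_subset by blast
  have fu: "f u \<subseteq> C \<and> u \<in> f u \<and> (card (f u) = 2 \<or> card (f u) = 3)" if "u \<in> C-{v}" for u
    using f that unfolding FF_def Cand_def by (auto simp: PiE_iff)
  have inj: "inj_on f (C-{v})" using f unfolding FF_def by auto
  have P2e: "P2s C v f \<subseteq> edges_of_size n 2" using fu C unfolding P2s_def edges_of_size_def by fastforce
  have P3e: "P3s C v f \<subseteq> edges_of_size n 3" using fu C unfolding P3s_def edges_of_size_def by fastforce
  have d2: "P2s C v f \<inter> N2s n C = {}" using fu unfolding P2s_def N2s_def by fastforce
  have d3: "P3s C v f \<inter> N3s n C = {}" using fu unfolding P3s_def N3s_def by fastforce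
  have c2: "card (P2s C v f) = card {u \<in> C-{v}. card (f u) = 2}"
    unfolding P2s_def by (rule card_image) (rule inj_on_subset[OF inj], auto)
  have c3: "card (P3s C v f) = card {u \<in> C-{v}. card (f u) = 3}"
    unfolding P3s_def by (rule card_image) (rule inj_on_subset[OF inj], auto)
  have "(\<Prod>u\<in>C-{v}. wt p2 p3 (f u)) = p2 ^ card ((C-{v}) \<inter> {u. card (f u) = 2}) * p3 ^ card ((C-{v}) \<inter> - {u. card (f u) = 2})"
    unfolding wt_def using fC by (simp add: prod.If_cases)
  also have "(C-{v}) \<inter> - {u. card (f u) = 2} = {u \<in> C-{v}. card (f u) = 3}" using fu by auto
  also have "(C-{v}) \<inter> {u. card (f u) = 2} = {u \<in> C-{v}. card (f u) = 2}" by auto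
  finally have pr: "(\<Prod>u\<in>C-{v}. wt p2 p3 (f u)) = p2 ^ card (P2s C v f) * p3 ^ card (P3s C v f)"
    using c2 c3 by simp
  show ?thesis unfolding Ev_def
    by (subst prob_hg[OF P2e N2_sub[OF C] d2 P3e N3_sub[OF C] d3 p]) (simp add: pr algebra_simps)
qed

lemma wt_nonneg: "0 \<le> p2 \<Longrightarrow> 0 \<le> p3 \<Longrightarrow> 0 \<le> wt p2 p3 e" by (simp add: wt_def)

lemma sum_FF:
  fixes p2 p3 :: real
  assumes p: "0 \<le> p2" "0 \<le> p3" and fC: "finite C" and v: "v \<in> C"
  shows "(\<Sum>f\<in>FF C v. \<Prod>u\<in>C-{v}. wt p2 p3 (f u)) \<le> (card C * p2 + card C ^ 2 * p3) ^ (card C - 1)"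
proof -
  have finPi: "finite (PiE (C-{v}) (Cand C))" using fC by (intro finite_PiE) (auto intro: finite_Cand)
  have "(\<Sum>f\<in>FF C v. \<Prod>u\<in>C-{v}. wt p2 p3 (f u)) \<le> (\<Sum>f\<in>PiE (C-{v}) (Cand C). \<Prod>u\<in>C-{v}. wt p2 p3 (f u))"
    by (rule sum_mono2[OF finPi]) (auto simp: FF_def intro!: prod_nonneg wt_nonneg p)
  also have "\<dots> = (\<Prod>u\<in>C-{v}. \<Sum>e\<in>Cand C u. wt p2 p3 e)"
    by (rule prod_sum_PiE[symmetric]) (use fC in \<open>auto intro: finite_Cand\<close>)
  also have "\<dots> \<le> (\<Prod>u\<in>C-{v}. (card C * p2 + card C ^ 2 * p3))"
    by (rule prod_mono) (use sum_Cand[OF fC p] in \<open>auto intro!: sum_nonneg wt_nonneg p\<close>)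
  also have "\<dots> = (card C * p2 + card C ^ 2 * p3) ^ (card C - 1)"
    using fC v by simp
  finally show ?thesis .
qed

lemma N3_closed:
  assumes v: "v < n" shows "snd H \<inter> N3s n (prop_component n H v) = {}"
proof (rule ccontr)
  assume "\<not> ?thesis"
  then obtain e where e: "e \<in> snd H" "e \<in> N3s n (prop_component n H v)" by blast
  then obtain s u where su: "e = insert u s" "s \<subseteq> prop_component n H v" "card s = 2" "u < n" "u \<notin> prop_component n H v"
    unfolding N3s_def by auto
  then obtain x y where xy: "s = {x,y}" "x \<noteq> y" by (metis card_2_iff)
  have "{x,y,u} \<notin> snd H" using closure3[OF v, where H=H and a=x and b=y and u=u] su xy by auto
  moreover have "e = {x,y,u}" using su xy by auto
  ultimately show False using e by simp
qed

lemma N2_closed: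
  assumes v: "v < n" shows "fst H \<inter> N2s n (prop_component n H v) = {}"
  using closure2[OF v, where H=H] unfolding N2s_def by auto

lemma bad_bound:
  fixes p2 p3 a :: real
  assumes p: "0 \<le> p2" "p2 \<le> 1" "0 \<le> p3" "p3 \<le> 1"
  shows "measure_pmf.prob (random_hypergraph n p2 p3)
     {H. \<exists>v<n. a \<le> real (card (prop_component n H v)) \<and> card (prop_component n H v) \<le> n - 1}
     \<le> (\<Sum>k\<in>{k. k < n \<and> a \<le> real k}. bnd n p2 p3 k)"
proof -
  define M where "M = random_hypergraph n p2 p3"
  define Sk where "Sk k = {C. C \<subseteq> {..<n} \<and> card C = k}" for k
  define EA where "EA k = (\<Union>C\<in>Sk k. \<Union>v\<in>C. \<Union>f\<in>FF C v. Ev n C v f)" for k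
  define EB where "EB k = (\<Union>C\<in>Sk k. {H :: nat set set \<times> nat set set. snd H \<inter> N3s n C = {}})" for k
  define E where "E k = (if 8*k \<le> n then EA k else EB k)" for k
  define Ks where "Ks = {k. k < n \<and> a \<le> real k}"
  have finKs: "finite Ks" unfolding Ks_def by auto
  have finSk: "finite (Sk k)" for k unfolding Sk_def by (rule finite_subset[of _ "Pow {..<n}"]) auto
  have cardSk: "card (Sk k) = n choose k" for k unfolding Sk_def using n_subsets[of "{..<n}" k] by simp
  have sub: "{H. \<exists>v<n. a \<le> real (card (prop_component n H v)) \<and> card (prop_component n H v) \<le> n - 1}
      \<subseteq> (\<Union>k\<in>Ks. E k)"
  proof
    fix H assume "H \<in> {H. \<exists>v<n. a \<le> real (card (prop_component n H v)) \<and> card (prop_component n H v) \<le> n - 1}"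
    then obtain v where v: "v < n" "a \<le> real (card (prop_component n H v))" "card (prop_component n H v) \<le> n-1" by auto
    define C where "C = prop_component n H v"
    define k where "k = card C"
    have Csub: "C \<subseteq> {..<n}" using C_sub[OF v(1)] C_def by simp
    have vC: "v \<in> C" using v_in_C[OF v(1)] C_def by simp
    have kKs: "k \<in> Ks" using v unfolding Ks_def k_def C_def by auto
    have CS: "C \<in> Sk k" using Csub unfolding Sk_def k_def by auto
    have n3: "snd H \<inter> N3s n C = {}" using N3_closed[OF v(1)] C_def by simp
    have n2: "fst H \<inter> N2s n C = {}" using N2_closed[OF v(1)] C_def by simp
    show "H \<in> (\<Union>k\<in>Ks. E k)"
    proof (cases "8*k \<le> n")
      case True
      obtain f where f: "inj_on f (C - {v})" "\<forall>u\<in>C-{v}. u \<in> f u \<and> f u \<subseteq> C \<and>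
          (card (f u) = 2 \<and> f u \<in> fst H \<or> card (f u) = 3 \<and> f u \<in> snd H)"
        using witness[OF v(1), where H=H] unfolding C_def by blast
      define g where "g = restrict f (C - {v})"
      have gF: "g \<in> FF C v" unfolding FF_def g_def Cand_def using f
        by (auto simp: PiE_iff inj_on_def)
      have "P2s C v g \<subseteq> fst H"
      proof
        fix e assume "e \<in> P2s C v g"
        then obtain u where u: "u \<in> C - {v}" "card (f u) = 2" "e = f u" unfolding P2s_def g_def by auto
        then show "e \<in> fst H" using f(2) by force
      qed
      moreover have "P3s C v g \<subseteq> snd H"
      proof
        fix e assume "e \<in> P3s C v g"
        then obtain u where u: "u \<in> C - {v}" "card (f u) = 3" "e = f u" unfolding P3s_def g_def by auto
        then show "e \<in> snd H" using f(2) by force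
      qed
      ultimately have "H \<in> Ev n C v g" using n2 n3 unfolding Ev_def by auto
      then have "H \<in> EA k" unfolding EA_def by (intro UN_I[OF CS] UN_I[OF vC] UN_I[OF gF])
      then have "H \<in> E k" unfolding E_def using True by simp
      then show ?thesis by (rule UN_I[OF kKs])
    next
      case False
      have "H \<in> EB k" unfolding EB_def using n3 by (intro UN_I[OF CS]) simp
      then have "H \<in> E k" unfolding E_def using False by simp
      then show ?thesis by (rule UN_I[OF kKs])
    qed
  qed
  have Ek: "measure_pmf.prob M (E k) \<le> bnd n p2 p3 k" for k
  proof (cases "8*k \<le> n")
    case True
    define W where "W = (k*p2 + k^2*p3)^(k-1)"
    define Z where "Z = (1-p2)^(k*(n-k)) * (1-p3)^((k choose 2)*(n-k))"
    have Z0: "0 \<le> Z" using p unfolding Z_def by simp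
    have bC: "measure_pmf.prob M (\<Union>v\<in>C. \<Union>f\<in>FF C v. Ev n C v f) \<le> k * (W * Z)" if C: "C \<in> Sk k" for C
    proof -
      have Cs: "C \<subseteq> {..<n}" "card C = k" using C unfolding Sk_def by auto
      have fC: "finite C" using Cs finite_subset by blast
      have bv: "measure_pmf.prob M (\<Union>f\<in>FF C v. Ev n C v f) \<le> W * Z" if vC: "v \<in> C" for v
      proof -
        have finF: "finite (FF C v)" unfolding FF_def
          by (rule finite_subset[of _ "PiE (C-{v}) (Cand C)"]) (use fC in \<open>auto intro!: finite_PiE finite_Cand\<close>)
        have "measure_pmf.prob M (\<Union>f\<in>FF C v. Ev n C v f) \<le> (\<Sum>f\<in>FF C v. measure_pmf.prob M (Ev n C v f))"
          by (rule measure_pmf.finite_measure_subadditive_finite[OF finF]) simp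
        also have "\<dots> = (\<Sum>f\<in>FF C v. (\<Prod>u\<in>C-{v}. wt p2 p3 (f u)) * Z)"
          by (rule sum.cong[OF refl]) (simp add: M_def prob_Ev[OF p Cs(1)] card_N2[OF Cs(1)] card_N3[OF Cs(1)] Cs(2) Z_def)
        also have "\<dots> = (\<Sum>f\<in>FF C v. (\<Prod>u\<in>C-{v}. wt p2 p3 (f u))) * Z"
          by (simp add: sum_distrib_right)
        also have "\<dots> \<le> W * Z"
          using sum_FF[OF p(1) p(3) fC vC] Z0 Cs(2) unfolding W_def
          by (intro mult_right_mono) (simp_all add: of_nat_power)
        finally show ?thesis .
      qed
      have "measure_pmf.prob M (\<Union>v\<in>C. \<Union>f\<in>FF C v. Ev n C v f) \<le> (\<Sum>v\<in>C. measure_pmf.prob M (\<Union>f\<in>FF C v. Ev n C v f))"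
        by (rule measure_pmf.finite_measure_subadditive_finite[OF fC]) simp
      also have "\<dots> \<le> (\<Sum>v\<in>C. W * Z)" by (rule sum_mono) (rule bv)
      also have "\<dots> = k * (W * Z)" using Cs by simp
      finally show ?thesis .
    qed
    have "measure_pmf.prob M (E k) \<le> (\<Sum>C\<in>Sk k. measure_pmf.prob M (\<Union>v\<in>C. \<Union>f\<in>FF C v. Ev n C v f))"
      unfolding E_def EA_def using True by (simp add: measure_pmf.finite_measure_subadditive_finite[OF finSk])
    also have "\<dots> \<le> (\<Sum>C\<in>Sk k. k * (W * Z))" by (rule sum_mono) (rule bC)
    also have "\<dots> = bnd n p2 p3 k" using True by (simp add: cardSk bnd_def W_def Z_def)
    finally show ?thesis .
  next
    case False
    have bC: "measure_pmf.prob M {H. snd H \<inter> N3s n C = {}} \<le> (1-p3)^((k choose 2)*(n-k))" if C: "C \<in> Sk k" for C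
    proof -
      have Cs: "C \<subseteq> {..<n}" "card C = k" using C unfolding Sk_def by auto
      have "{H. snd H \<inter> N3s n C = {}} = {H. {} \<subseteq> fst H \<and> fst H \<inter> {} = {} \<and> {} \<subseteq> snd H \<and> snd H \<inter> N3s n C = {}}" by auto
      then show ?thesis unfolding M_def using prob_hg[of "{}" n "{}" "{}" "N3s n C" p2 p3] N3_sub[OF Cs(1)] p
        by (simp add: card_N3[OF Cs(1)] Cs(2))
    qed
    have "measure_pmf.prob M (E k) \<le> (\<Sum>C\<in>Sk k. measure_pmf.prob M {H. snd H \<inter> N3s n C = {}})"
      unfolding E_def EB_def using False by (simp add: measure_pmf.finite_measure_subadditive_finite[OF finSk])
    also have "\<dots> \<le> (\<Sum>C\<in>Sk k. (1-p3)^((k choose 2)*(n-k)))" by (rule sum_mono) (rule bC)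
    also have "\<dots> = bnd n p2 p3 k" using False by (simp add: cardSk bnd_def)
    finally show ?thesis .
  qed
  have "measure_pmf.prob M {H. \<exists>v<n. a \<le> real (card (prop_component n H v)) \<and> card (prop_component n H v) \<le> n - 1}
      \<le> measure_pmf.prob M (\<Union>k\<in>Ks. E k)"
    by (rule measure_pmf.finite_measure_mono[OF sub]) simp
  also have "\<dots> \<le> (\<Sum>k\<in>Ks. measure_pmf.prob M (E k))"
    by (rule measure_pmf.finite_measure_subadditive_finite[OF finKs]) simp
  also have "\<dots> \<le> (\<Sum>k\<in>Ks. bnd n p2 p3 k)" by (rule sum_mono) (rule Ek)
  finally show ?thesis unfolding M_def Ks_def .
qed


lemma ln_seq_top: "filterlim (\<lambda>n::nat. ln (real n)) at_top sequentially"
  by (rule filterlim_compose[OF ln_at_top filterlim_real_sequentially])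

lemma ln2_over_n: "(\<lambda>n::nat. ln (real n)^2 / real n) \<longlonglongrightarrow> 0"
proof -
  have "(\<lambda>n::nat. ln (real n)^2 / exp (ln (real n))) \<longlonglongrightarrow> 0"
    by (rule filterlim_compose[OF tendsto_power_div_exp_0 ln_seq_top])
  moreover have "eventually (\<lambda>n::nat. ln (real n)^2 / exp (ln (real n)) = ln (real n)^2 / real n) sequentially"
    using eventually_gt_at_top[of 0] by eventually_elim simp
  ultimately show ?thesis by (rule Lim_transform_eventually)
qed

theorem lemma3:
  fixes \<epsilon> r :: real
  assumes "0 < \<epsilon>" and "\<epsilon> < 1" and "0 < r"
  defines "K0 \<equiv> max 1 (2 * (9 + \<epsilon>) / r)"
  shows "(\<lambda>n::nat. measure_pmf.prob
            (random_hypergraph n ((1 - \<epsilon>) / real n) (r / (real n * ln (real n))))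
            {H. \<not> (\<exists>v<n. K0 * ln (real n) \<le> real (card (prop_component n H v)) \<and>
                         card (prop_component n H v) \<le> n - 1)})
         \<longlonglongrightarrow> 1"
proof -
  note e = assms(1,2) and r = assms(3)
  have K1: "1 \<le> K0" and K2: "2 * (9 + \<epsilon>) / r \<le> K0" unfolding K0_def by auto
  define Bad where "Bad n = measure_pmf.prob
            (random_hypergraph n ((1 - \<epsilon>) / real n) (r / (real n * ln (real n))))
            {H. \<exists>v<n. K0 * ln (real n) \<le> real (card (prop_component n H v)) \<and>
                         card (prop_component n H v) \<le> n - 1}" for n
  have compl: "measure_pmf.prob
            (random_hypergraph n ((1 - \<epsilon>) / real n) (r / (real n * ln (real n))))
            {H. \<not> (\<exists>v<n. K0 * ln (real n) \<le> real (card (prop_component n H v)) \<and>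
                         card (prop_component n H v) \<le> n - 1)} = 1 - Bad n" for n
  proof -
    have "{H. \<not> (\<exists>v<n. K0 * ln (real n) \<le> real (card (prop_component n H v)) \<and>
                         card (prop_component n H v) \<le> n - 1)}
        = space (measure_pmf (random_hypergraph n ((1 - \<epsilon>) / real n) (r / (real n * ln (real n)))))
          - {H. \<exists>v<n. K0 * ln (real n) \<le> real (card (prop_component n H v)) \<and>
                         card (prop_component n H v) \<le> n - 1}" (is "?A = space ?M - ?B") by auto
    then have "measure ?M ?A = measure ?M (space ?M - ?B)" by simp
    also have "\<dots> = 1 - measure ?M ?B" by (rule measure_pmf.prob_compl) simp
    finally show ?thesis unfolding Bad_def .
  qed
  have ev1: "eventually (\<lambda>n::nat. max 1 (2*r) \<le> ln (real n)) sequentially"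
    using ln_seq_top unfolding filterlim_at_top by blast
  have ev2: "eventually (\<lambda>n::nat. ln (real n)^2 / real n < r/768) sequentially"
    using order_tendstoD(2)[OF ln2_over_n, of "r/768"] r by simp
  have ev3: "eventually (\<lambda>n::nat. 16 \<le> n) sequentially" by (rule eventually_ge_at_top)
  have evB: "eventually (\<lambda>n. Bad n \<le> 1 / real n) sequentially"
    using ev1 ev2 ev3
  proof eventually_elim
    case (elim n)
    define L where "L = ln (real n)"
    define nn where "nn = real n"
    have nn16: "16 \<le> nn" using elim unfolding nn_def by simp
    have L1: "1 \<le> L" "2*r \<le> L" using elim(1) unfolding L_def by auto
    have L0: "0 < L" using L1 by simp
    have y4: "r/(2*L) \<le> 1/4" using L1 L0 by (simp add: field_simps)
    have big: "768*L^2 \<le> r*nn" using elim(2) nn16 unfolding L_def nn_def by (simp add: field_simps)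
    have p3le: "r/(nn*L) \<le> 1"
    proof -
      have "r \<le> 1 * L" using L1 r by simp
      also have "\<dots> \<le> nn * L" using nn16 L0 by (intro mult_right_mono) auto
      finally show ?thesis using nn16 L0 by simp
    qed
    have p: "0 \<le> (1-\<epsilon>)/nn" "(1-\<epsilon>)/nn \<le> 1" "0 \<le> r/(nn*L)" "r/(nn*L) \<le> 1"
      using e r nn16 L0 p3le by (auto simp: field_simps)
    have kb: "bnd n ((1-\<epsilon>)/nn) (r/(nn*L)) k \<le> 1/nn^2" if k: "k \<in> {k. k < n \<and> K0 * ln (real n) \<le> real k}" for k
    proof -
      have kn: "k < n" and Kk: "K0 * L \<le> real k" using k unfolding L_def by auto
      have "1 * L \<le> K0 * L" using K1 L0 by (intro mult_right_mono) auto
      then have Lk: "L \<le> real k" using Kk by simp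
      have k1: "1 \<le> k" using Lk L1 by simp
      have "(9 + \<epsilon>) \<le> r * K0 / 2" using K2 r by (simp add: field_simps)
      also have "r * K0 / 2 = r * (K0 * L) / (2*L)" using L0 by simp
      also have "\<dots> \<le> r * real k / (2*L)" using Kk r L0 by (intro divide_right_mono mult_left_mono) auto
      finally have lam: "10 \<le> 1 - \<epsilon> + r * real k / (2*L)" by simp
      show ?thesis
      proof (cases "8*k \<le> n")
        case True
        show ?thesis using caseA[OF e r L1(1)[unfolded L_def] y4[unfolded L_def] k1 True Lk[unfolded L_def] lam[unfolded L_def]] True
          unfolding bnd_def nn_def L_def by simp
      next
        case False
        show ?thesis using caseB[OF r L1(1)[unfolded L_def] elim(3) _ kn big[unfolded L_def nn_def] p3le[unfolded L_def nn_def]] False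
          unfolding bnd_def nn_def L_def by simp
      qed
    qed
    have "Bad n \<le> (\<Sum>k\<in>{k. k < n \<and> K0 * ln (real n) \<le> real k}. bnd n ((1-\<epsilon>)/nn) (r/(nn*L)) k)"
      unfolding Bad_def nn_def L_def using bad_bound[of "(1-\<epsilon>)/real n" "r/(real n * ln (real n))" n "K0 * ln (real n)"] p
      unfolding nn_def L_def by simp
    also have "\<dots> \<le> (\<Sum>k\<in>{k. k < n \<and> K0 * ln (real n) \<le> real k}. 1/nn^2)"
      by (rule sum_mono) (rule kb)
    also have "\<dots> = card {k. k < n \<and> K0 * ln (real n) \<le> real k} * (1/nn^2)" by simp
    also have "\<dots> \<le> nn * (1/nn^2)"
    proof (rule mult_right_mono)
      have "card {k. k < n \<and> K0 * ln (real n) \<le> real k} \<le> card {..<n}" by (rule card_mono) auto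
      then show "real (card {k. k < n \<and> K0 * ln (real n) \<le> real k}) \<le> nn" unfolding nn_def by simp
    qed simp
    also have "\<dots> = 1 / real n" using nn16 unfolding nn_def by (simp add: power2_eq_square)
    finally show ?case .
  qed
  have B0: "Bad \<longlonglongrightarrow> 0"
  proof (rule tendsto_sandwich[of "\<lambda>_. 0" _ _ "\<lambda>n. 1 / real n"])
    show "eventually (\<lambda>n. 0 \<le> Bad n) sequentially" unfolding Bad_def by simp
    show "eventually (\<lambda>n. Bad n \<le> 1 / real n) sequentially" by (rule evB)
    show "(\<lambda>n. 1 / real n) \<longlonglongrightarrow> 0" by (rule lim_const_over_n)
  qed simp
  have "(\<lambda>n. 1 - Bad n) \<longlonglongrightarrow> 1 - 0" by (intro tendsto_intros B0)
  then show ?thesis unfolding compl by simp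
qed

end
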